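(* Let $n\in\mathbb N$ and let $(x_t)_{t\in\Omega}$ be a continuous frame for $\mathbb R^n$ with lower frame bound $A$. Then for every $x\in\mathbb R^n$, $(x_t)_{t\in\Omega}$ does $A^{-1/2}$-stable phase retrieval near $x$.
   Context: A continuous frame $(x_t)_{t\in\Omega}$ for a Hilbert space $H$ over a measure space $(\Omega,\mu)$ satisfies $A\|x\|^2\le\int_\Omega|\langle x,x_t\rangle|^2d\mu\le B\|x\|^2$ for all $x\in H$ with $B\ge A>0$ ($A$ a lower frame bound); its analysis operator is $\Theta(x)=(\langle x,x_t\rangle)_{t\in\Omega}\in L_2(\Omega)$, $|\Theta x|=(|\langle x,x_t\rangle|)_{t\in\Omega}$. For $x,y$ with $x\neq\lambda y$ for all scalars $|\lambda|=1$, set $\Psi(x,y)=\||\Theta x|-|\Theta y|\|_{L_2(\Omega)}/\min_{|\lambda|=1}\|x-\lambda y\|$. For $C>0$, the frame does $C$-stable phase retrieval near $x$ if $\liminf_{y\to x,\ y\notin\{\lambda x:|\lambda|=1\}} C\,\Psi(x,y)\ge1$. *)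

theory Defs
  imports "HOL-Analysis.Analysis"
begin

text \<open>Weak measurability of
t \<mapsto> <x, x_t> is part of the notion; the integral is the (possibly infinite)
nonnegative integral, bounded by the frame inequality.\<close>
definition continuous_frame :: "'a measure \<Rightarrow> ('a \<Rightarrow> real^'n) \<Rightarrow> real \<Rightarrow> real \<Rightarrow> bool" where
  "continuous_frame M xt A B \<longleftrightarrow> 0 < A \<and> A \<le> B \<and>
     (\<forall>x::real^'n. (\<lambda>t. x \<bullet> xt t) \<in> borel_measurable M \<and>
        ennreal (A * (norm x)\<^sup>2) \<le> (\<integral>\<^sup>+ t. ennreal ((x \<bullet> xt t)\<^sup>2) \<partial>M) \<and>
        (\<integral>\<^sup>+ t. ennreal ((x \<bullet> xt t)\<^sup>2) \<partial>M) \<le> ennreal (B * (norm x)\<^sup>2))"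

definition abs_analysis_dist :: "'a measure \<Rightarrow> ('a \<Rightarrow> real^'n) \<Rightarrow> real^'n \<Rightarrow> real^'n \<Rightarrow> real" where
  "abs_analysis_dist M xt x y =
     sqrt (enn2real (\<integral>\<^sup>+ t. ennreal ((\<bar>x \<bullet> xt t\<bar> - \<bar>y \<bullet> xt t\<bar>)\<^sup>2) \<partial>M))"

definition phase_dist :: "real^'n \<Rightarrow> real^'n \<Rightarrow> real" where
  "phase_dist x y = Inf {norm (x - l *\<^sub>R y) | l::real. \<bar>l\<bar> = 1}"

definition Psi :: "'a measure \<Rightarrow> ('a \<Rightarrow> real^'n) \<Rightarrow> real^'n \<Rightarrow> real^'n \<Rightarrow> real" where
  "Psi M xt x y = abs_analysis_dist M xt x y / phase_dist x y"

definition stable_phase_retrieval_near :: "'a measure \<Rightarrow> ('a \<Rightarrow> real^'n) \<Rightarrow> real \<Rightarrow> real^'n \<Rightarrow> bool" where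
  "stable_phase_retrieval_near M xt C x \<longleftrightarrow>
     Liminf (at x within {y. \<forall>l::real. \<bar>l\<bar> = 1 \<longrightarrow> y \<noteq> l *\<^sub>R x})
            (\<lambda>y. ereal (C * Psi M xt x y)) \<ge> 1"

end

theory Submission
  imports Defs
begin

lemma pw_ineq:
  fixes a b D n e :: real
  assumes "\<bar>b\<bar> \<le> D * n" "D < e" "0 \<le> D" "0 \<le> n"
  shows "b\<^sup>2 \<le> (\<bar>a\<bar> - \<bar>a + b\<bar>)\<^sup>2 + D\<^sup>2 * (if 0 < \<bar>a\<bar> \<and> \<bar>a\<bar> < e * n then n\<^sup>2 else 0)"
proof (cases "a * (a + b) \<ge> 0")
  case True
  then have "(\<bar>a\<bar> - \<bar>a + b\<bar>)\<^sup>2 = b\<^sup>2"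
  proof -
    have "\<bar>a\<bar> - \<bar>a + b\<bar> = b \<or> \<bar>a\<bar> - \<bar>a + b\<bar> = - b"
      using True by (cases "a \<ge> 0"; cases "a + b \<ge> 0") (auto simp: mult_le_0_iff zero_le_mult_iff)
    then show ?thesis by auto
  qed
  moreover have "0 \<le> D\<^sup>2 * (if 0 < \<bar>a\<bar> \<and> \<bar>a\<bar> < e * n then n\<^sup>2 else 0)" by simp
  ultimately show ?thesis by linarith
next
  case False
  then have "\<bar>a\<bar> < \<bar>b\<bar>" "0 < \<bar>a\<bar>"
    by (cases "a \<ge> 0"; cases "a + b \<ge> 0"; auto simp: mult_le_0_iff zero_le_mult_iff)+
  moreover have "D * n \<le> e * n" using assms by (simp add: mult_right_mono)
  ultimately have c: "0 < \<bar>a\<bar> \<and> \<bar>a\<bar> < e * n" using assms by linarith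
  have "b\<^sup>2 \<le> (D * n)\<^sup>2" using assms(1)
    by (metis abs_ge_zero order_trans power2_abs power_mono)
  moreover have "0 \<le> (\<bar>a\<bar> - \<bar>a + b\<bar>)\<^sup>2" by simp
  moreover have "D\<^sup>2 * (if 0 < \<bar>a\<bar> \<and> \<bar>a\<bar> < e * n then n\<^sup>2 else 0) = (D * n)\<^sup>2"
    using c by (simp add: power_mult_distrib)
  ultimately show ?thesis by linarith
qed

lemma phase_dist_eq: "phase_dist x y = min (norm (x - y)) (norm (x + y))"
proof -
  have "{norm (x - l *\<^sub>R y) | l::real. \<bar>l\<bar> = 1} = {norm (x - y), norm (x + y)}"
  proof (intro set_eqI iffI)
    fix z assume "z \<in> {norm (x - l *\<^sub>R y) | l::real. \<bar>l\<bar> = 1}"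
    then obtain l where "z = norm (x - l *\<^sub>R y)" "\<bar>l\<bar> = 1" by blast
    then show "z \<in> {norm (x - y), norm (x + y)}" by (cases "l \<ge> 0") auto
  next
    fix z assume "z \<in> {norm (x - y), norm (x + y)}"
    then show "z \<in> {norm (x - l *\<^sub>R y) | l::real. \<bar>l\<bar> = 1}"
    proof
      assume "z = norm (x - y)" then show ?thesis by (intro CollectI exI[of _ 1]) simp
    next
      assume "z \<in> {norm (x + y)}" then show ?thesis by (intro CollectI exI[of _ "-1"]) simp
    qed
  qed
  then show ?thesis unfolding phase_dist_def by (simp add: cInf_insert inf_min)
qed


theorem theorem3p2:
  fixes M :: "'a measure" and xt :: "'a \<Rightarrow> real^'n" and A B :: real
  assumes "continuous_frame M xt A B"
  shows "\<forall>x::real^'n. stable_phase_retrieval_near M xt (1 / sqrt A) x"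
proof
  fix x :: "real^'n"
  have A0: "0 < A" and B0: "A \<le> B"
    and meas[measurable]: "\<And>v. (\<lambda>t. v \<bullet> xt t) \<in> borel_measurable M"
    and low: "\<And>v. ennreal (A * (norm v)\<^sup>2) \<le> (\<integral>\<^sup>+ t. ennreal ((v \<bullet> xt t)\<^sup>2) \<partial>M)"
    and up: "\<And>v. (\<integral>\<^sup>+ t. ennreal ((v \<bullet> xt t)\<^sup>2) \<partial>M) \<le> ennreal (B * (norm v)\<^sup>2)"
    using assms unfolding continuous_frame_def by auto
  define N where "N t = (norm (xt t))\<^sup>2" for t
  have Neq: "N = (\<lambda>t. \<Sum>i\<in>UNIV. (axis i 1 \<bullet> xt t)\<^sup>2)"
    by (rule ext) (simp add: N_def norm_vec_def L2_set_def sum_nonneg inner_axis')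
  have Nmeas[measurable]: "N \<in> borel_measurable M" unfolding Neq by measurable
  have nxeq: "(\<lambda>t. norm (xt t)) = (\<lambda>t. sqrt (N t))"
    by (rule ext) (simp add: N_def)
  have nxmeas[measurable]: "(\<lambda>t. norm (xt t)) \<in> borel_measurable M" unfolding nxeq by measurable
  have Nfin: "(\<integral>\<^sup>+ t. ennreal (N t) \<partial>M) < \<infinity>"
  proof -
    have "(\<integral>\<^sup>+ t. ennreal (N t) \<partial>M) = (\<integral>\<^sup>+ t. (\<Sum>i\<in>UNIV. ennreal ((axis i 1 \<bullet> xt t)\<^sup>2)) \<partial>M)"
      unfolding Neq by (simp add: sum_nonneg)
    also have "\<dots> = (\<Sum>i\<in>UNIV. (\<integral>\<^sup>+ t. ennreal ((axis i 1 \<bullet> xt t)\<^sup>2) \<partial>M))"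
      by (rule nn_integral_sum) measurable
    also have "\<dots> \<le> (\<Sum>i\<in>(UNIV::'n set). ennreal (B * (norm (axis i (1::real)))\<^sup>2))"
      by (intro sum_mono up)
    also have "\<dots> < \<infinity>" by (simp add: less_top[symmetric] ennreal_mult_eq_top_iff)
    finally show ?thesis .
  qed
  define f where "f k t = ennreal (if 0 < \<bar>x \<bullet> xt t\<bar> \<and> \<bar>x \<bullet> xt t\<bar> < (1 / Suc k) * norm (xt t) then N t else 0)" for k t
  have fmeas[measurable]: "f k \<in> borel_measurable M" for k
    unfolding f_def by measurable
  have fdec: "decseq f"
  proof (rule decseq_SucI, rule le_funI)
    fix k t
    have "(1 / Suc (Suc k)) * norm (xt t) \<le> (1 / Suc k) * norm (xt t)"
      by (intro mult_right_mono) (auto simp: frac_le)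
    then show "f (Suc k) t \<le> f k t" unfolding f_def
      by (auto simp: N_def)
  qed
  have fle: "f k t \<le> ennreal (N t)" for k t unfolding f_def by (simp add: N_def)
  have f0: "(INF k. f k t) = 0" for t
  proof (cases "0 < \<bar>x \<bullet> xt t\<bar>")
    case True
    obtain k :: nat where "norm (xt t) / \<bar>x \<bullet> xt t\<bar> < k" using reals_Archimedean2 by blast
    then have "norm (xt t) < k * \<bar>x \<bullet> xt t\<bar>" using True by (simp add: divide_less_eq)
    then have "(1 / Suc k) * norm (xt t) \<le> \<bar>x \<bullet> xt t\<bar>"
      using True by (simp add: field_simps)
    then have "f k t = 0" unfolding f_def by auto
    then show ?thesis by (metis INF_lower UNIV_I bot.extremum_uniqueI bot_ennreal)
  next
    case False
    then have "f 0 t = 0" unfolding f_def by auto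
    then show ?thesis by (metis INF_lower UNIV_I bot.extremum_uniqueI bot_ennreal)
  qed
  have INF0: "(INF k. (\<integral>\<^sup>+ t. f k t \<partial>M)) = 0"
  proof -
    have "(\<integral>\<^sup>+ t. f 0 t \<partial>M) < \<infinity>"
      using Nfin fle by (meson le_less_trans nn_integral_mono)
    then have "(\<integral>\<^sup>+ t. (INF k. f k t) \<partial>M) = (INF k. (\<integral>\<^sup>+ t. f k t \<partial>M))"
      using nn_integral_monotone_convergence_INF_decseq[OF fdec fmeas] by blast
    then show ?thesis using f0 by simp
  qed
  show "stable_phase_retrieval_near M xt (1 / sqrt A) x"
    unfolding stable_phase_retrieval_near_def le_Liminf_iff
  proof (intro allI impI)
    fix c :: ereal assume "c < 1"
    then obtain z :: real where z: "c < ereal z" "ereal z < 1" using ereal_dense2 by blast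
    define r where "r = max z (1/2)"
    have r: "c < ereal r" "r < 1" "1/2 \<le> r" using z by (auto simp: r_def le_max_iff_disj less_max_iff_disj)
    define \<eta> where "\<eta> = A * (1 - r\<^sup>2) / 2"
    have eta0: "0 < \<eta>" using r A0 by (simp add: \<eta>_def power_less_one_iff abs_less_iff)
    then have "(INF k. (\<integral>\<^sup>+ t. f k t \<partial>M)) < ennreal \<eta>" using INF0 by simp
    then obtain k where k: "(\<integral>\<^sup>+ t. f k t \<partial>M) < ennreal \<eta>" by (auto simp: INF_less_iff)
    have main: "ereal r < ereal (1 / sqrt A * Psi M xt x y)"
      if y: "\<forall>l::real. \<bar>l\<bar> = 1 \<longrightarrow> y \<noteq> l *\<^sub>R x" "dist y x < 1 / Suc k" for y
    proof -
      define d where "d = y - x"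
      define D where "D = norm d"
      have yx: "y \<noteq> x" "y \<noteq> - x" using y(1) by (metis abs_one scaleR_one, metis abs_minus_cancel abs_one scaleR_minus1_left)
      have D0: "0 < D" using yx by (simp add: D_def d_def)
      have Dk: "D < 1 / Suc k" using y(2) by (simp add: D_def d_def dist_norm)
      define I where "I = (\<integral>\<^sup>+ t. ennreal ((\<bar>x \<bullet> xt t\<bar> - \<bar>y \<bullet> xt t\<bar>)\<^sup>2) \<partial>M)"
      have pwt: "ennreal ((d \<bullet> xt t)\<^sup>2) \<le> ennreal ((\<bar>x \<bullet> xt t\<bar> - \<bar>y \<bullet> xt t\<bar>)\<^sup>2) + ennreal (D\<^sup>2) * f k t" for t
      proof -
        have cs: "\<bar>d \<bullet> xt t\<bar> \<le> D * norm (xt t)" unfolding D_def by (rule Cauchy_Schwarz_ineq2)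
        have yeq: "y \<bullet> xt t = x \<bullet> xt t + d \<bullet> xt t" by (simp add: d_def inner_diff_left)
        have "(d \<bullet> xt t)\<^sup>2 \<le> (\<bar>x \<bullet> xt t\<bar> - \<bar>x \<bullet> xt t + d \<bullet> xt t\<bar>)\<^sup>2 + D\<^sup>2 * (if 0 < \<bar>x \<bullet> xt t\<bar> \<and> \<bar>x \<bullet> xt t\<bar> < (1 / Suc k) * norm (xt t) then (norm (xt t))\<^sup>2 else 0)"
          by (rule pw_ineq[OF cs Dk]) (use D0 in auto)
        then have "ennreal ((d \<bullet> xt t)\<^sup>2) \<le> ennreal ((\<bar>x \<bullet> xt t\<bar> - \<bar>y \<bullet> xt t\<bar>)\<^sup>2 + D\<^sup>2 * (if 0 < \<bar>x \<bullet> xt t\<bar> \<and> \<bar>x \<bullet> xt t\<bar> < (1 / Suc k) * norm (xt t) then N t else 0))"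
          unfolding yeq N_def by (rule ennreal_leI)
        also have "\<dots> = ennreal ((\<bar>x \<bullet> xt t\<bar> - \<bar>y \<bullet> xt t\<bar>)\<^sup>2) + ennreal (D\<^sup>2) * f k t"
          unfolding f_def by (subst ennreal_plus) (auto simp: ennreal_mult N_def)
        finally show ?thesis .
      qed
      have "ennreal (A * D\<^sup>2) \<le> (\<integral>\<^sup>+ t. ennreal ((d \<bullet> xt t)\<^sup>2) \<partial>M)" using low[of d] by (simp add: D_def)
      also have "\<dots> \<le> (\<integral>\<^sup>+ t. ennreal ((\<bar>x \<bullet> xt t\<bar> - \<bar>y \<bullet> xt t\<bar>)\<^sup>2) + ennreal (D\<^sup>2) * f k t \<partial>M)"
        by (intro nn_integral_mono pwt)
      also have "\<dots> = I + ennreal (D\<^sup>2) * (\<integral>\<^sup>+ t. f k t \<partial>M)"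
        unfolding I_def by (subst nn_integral_add) (auto simp: nn_integral_cmult)
      also have "\<dots> \<le> I + ennreal (D\<^sup>2) * ennreal \<eta>"
        using k by (intro add_left_mono mult_left_mono) auto
      finally have lowI: "ennreal (A * D\<^sup>2) \<le> I + ennreal (D\<^sup>2 * \<eta>)" using eta0 by (subst ennreal_mult) auto
      have "I \<le> (\<integral>\<^sup>+ t. ennreal ((d \<bullet> xt t)\<^sup>2) \<partial>M)"
        unfolding I_def
      proof (intro nn_integral_mono ennreal_leI)
        fix t
        have "y \<bullet> xt t = x \<bullet> xt t + d \<bullet> xt t" by (simp add: d_def inner_diff_left)
        then have "\<bar>\<bar>x \<bullet> xt t\<bar> - \<bar>y \<bullet> xt t\<bar>\<bar> \<le> \<bar>d \<bullet> xt t\<bar>" by linarith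
        then show "(\<bar>x \<bullet> xt t\<bar> - \<bar>y \<bullet> xt t\<bar>)\<^sup>2 \<le> (d \<bullet> xt t)\<^sup>2"
          by (metis abs_ge_zero power2_abs power_mono)
      qed
      also have "\<dots> \<le> ennreal (B * D\<^sup>2)" using up[of d] by (simp add: D_def)
      finally have Ifin: "I \<noteq> \<infinity>" by (auto simp: top_unique)
      then obtain Ir where Ir: "I = ennreal Ir" "0 \<le> Ir" by (cases I) auto
      have "A * D\<^sup>2 \<le> Ir + D\<^sup>2 * \<eta>"
        using lowI Ir eta0 by (simp add: ennreal_plus[symmetric] ennreal_le_iff del: ennreal_plus)
      then have IrA: "(A - \<eta>) * D\<^sup>2 \<le> Ir" by (simp add: algebra_simps)
      have Aeta: "0 < A - \<eta>"
      proof -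
        have "0 \<le> A * r\<^sup>2" using A0 by simp
        have p: "0 < (A + A * r\<^sup>2) / 2" using A0 by (intro divide_pos_pos add_pos_nonneg mult_nonneg_nonneg) auto
        have e: "A - \<eta> = (A + A * r\<^sup>2) / 2" by (simp add: \<eta>_def field_simps)
        show ?thesis unfolding e by (rule p)
      qed
      have aad: "abs_analysis_dist M xt x y = sqrt Ir"
        unfolding abs_analysis_dist_def I_def[symmetric] Ir using Ir by simp
      have pd: "0 < phase_dist x y" "phase_dist x y \<le> D"
        using yx by (auto simp: phase_dist_eq D_def d_def norm_minus_commute add.commute min_le_iff_disj eq_neg_iff_add_eq_0)
      have "sqrt (A - \<eta>) * D \<le> sqrt Ir"
        using IrA Aeta D0 by (metis real_sqrt_le_mono real_sqrt_mult real_sqrt_abs power2_eq_square abs_of_pos real_sqrt_mult_self)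
      then have "sqrt (A - \<eta>) * phase_dist x y \<le> sqrt Ir"
        using pd Aeta by (meson mult_left_mono order_trans real_sqrt_ge_zero less_imp_le)
      then have PsiL: "sqrt (A - \<eta>) \<le> Psi M xt x y"
        unfolding Psi_def aad using pd by (simp add: le_divide_eq)
      have "r < sqrt ((A - \<eta>) / A)"
      proof (rule real_less_rsqrt)
        have "(A - \<eta>) / A = (1 + r\<^sup>2) / 2" using A0 by (simp add: \<eta>_def field_simps)
        moreover have "r\<^sup>2 < 1" using r by (simp add: power_less_one_iff abs_less_iff)
        ultimately show "r\<^sup>2 < (A - \<eta>) / A" by (simp only:) (simp add: field_simps)
      qed
      also have "sqrt ((A - \<eta>) / A) = 1 / sqrt A * sqrt (A - \<eta>)" by (simp add: real_sqrt_divide)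
      also have "\<dots> \<le> 1 / sqrt A * Psi M xt x y" using PsiL A0 by (simp add: divide_right_mono)
      finally show ?thesis by simp
    qed
    show "\<forall>\<^sub>F y in at x within {y. \<forall>l::real. \<bar>l\<bar> = 1 \<longrightarrow> y \<noteq> l *\<^sub>R x}. c < ereal (1 / sqrt A * Psi M xt x y)"
      unfolding eventually_at
    proof (intro exI[of _ "1 / Suc k"] conjI ballI impI)
      show "0 < 1 / real (Suc k)" by simp
    next
      fix y assume "y \<in> {y. \<forall>l::real. \<bar>l\<bar> = 1 \<longrightarrow> y \<noteq> l *\<^sub>R x}" "y \<noteq> x \<and> dist y x < 1 / real (Suc k)"
      then have "ereal r < ereal (1 / sqrt A * Psi M xt x y)" by (intro main) auto
      then show "c < ereal (1 / sqrt A * Psi M xt x y)" by (rule less_trans[OF r(1)])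
    qed
  qed
qed

end
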